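(* Under the coupled PIMH scheme described in the context, for any $n\ge1$ and $s\ge0$, $p_N^{(n)}\ge\tilde p_N^{(n-1)}\implies p_N^{(n+s)}\ge\tilde p_N^{(n+s-1)}$ almost surely. (That is, the sequence $(p_N^{(n+1)})_{n\ge0}$ stochastically dominates $(\tilde p_N^{(n)})_{n\ge0}$ in this sense.)
   Context: A particle filter (PF) call $(X_{1:T},p_N)\sim\mathrm{PF}$ returns a random path $X_{1:T}$ and a strictly positive random likelihood estimate $p_N$. Coupled PIMH: sample $(X^{(0)},p_N^{(0)})\sim\mathrm{PF}$. At iteration $n\ge1$ draw a fresh independent $(X^*,p_N^* )\sim\mathrm{PF}$ and a single $\mathfrak u\sim\mathcal U[0,1]$ shared by both chains. First chain: if $\mathfrak u\le 1\wedge p_N^*/p_N^{(n-1)}$ set $(X^{(n)},p_N^{(n)})=(X^*,p_N^* )$, else $(X^{(n)},p_N^{(n)})=(X^{(n-1)},p_N^{(n-1)})$. Second chain: at $n=1$ set $(\tilde X^{(0)},\tilde p_N^{(0)})=(X^*,p_N^* )$; for $n\ge2$, if $\mathfrak u\le 1\wedge p_N^*/\tilde p_N^{(n-2)}$ set $(\tilde X^{(n-1)},\tilde p_N^{(n-1)})=(X^*,p_N^* )$, else $(\tilde X^{(n-1)},\tilde p_N^{(n-1)})=(\tilde X^{(n-2)},\tilde p_N^{(n-2)})$. *)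

theory Defs
  imports "HOL-Probability.Probability"
begin

text \<open>Z k = (X, p_N) is the k-th particle filter output:
  Z 0 is the initial draw, Z n (n \<ge> 1) the fresh proposal at iteration n;
  u n (n \<ge> 1) is the shared uniform at iteration n.\<close>

text \<open>First chain: pimh1 Z u n = (X^(n), p_N^(n)).\<close>
fun pimh1 :: "(nat \<Rightarrow> 'x \<times> real) \<Rightarrow> (nat \<Rightarrow> real) \<Rightarrow> nat \<Rightarrow> 'x \<times> real" where
  "pimh1 Z u 0 = Z 0"
| "pimh1 Z u (Suc n) =
     (if u (Suc n) \<le> min 1 (snd (Z (Suc n)) / snd (pimh1 Z u n))
      then Z (Suc n) else pimh1 Z u n)"

text \<open>Second chain: pimh2 Z u m = (tilde X^(m), tilde p_N^(m)); it is set at iteration m+1.\<close>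
fun pimh2 :: "(nat \<Rightarrow> 'x \<times> real) \<Rightarrow> (nat \<Rightarrow> real) \<Rightarrow> nat \<Rightarrow> 'x \<times> real" where
  "pimh2 Z u 0 = Z 1"
| "pimh2 Z u (Suc m) =
     (if u (m + 2) \<le> min 1 (snd (Z (m + 2)) / snd (pimh2 Z u m))
      then Z (m + 2) else pimh2 Z u m)"

end

theory Submission
  imports Defs
begin

lemma pimh1_pos: "(\<And>k. snd (Z k) > 0) \<Longrightarrow> snd (pimh1 Z u n) > 0"
  by (induction n) auto

lemma pimh2_pos: "(\<And>k. snd (Z k) > 0) \<Longrightarrow> snd (pimh2 Z u n) > 0"
  by (induction n) auto

lemma step_mono:
  assumes pos: "\<And>k. snd (Z k) > 0" and ge: "snd (pimh1 Z u (Suc m)) \<ge> snd (pimh2 Z u m)"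
  shows "snd (pimh1 Z u (Suc (Suc m))) \<ge> snd (pimh2 Z u (Suc m))"
proof -
  define a where "a = snd (pimh1 Z u (Suc m))"
  define b where "b = snd (pimh2 Z u m)"
  define z where "z = snd (Z (m+2))"
  have a: "a > 0" unfolding a_def by (rule pimh1_pos[OF pos])
  have b: "b > 0" unfolding b_def by (rule pimh2_pos[OF pos])
  have z: "z > 0" unfolding z_def using pos by auto
  have ab: "b \<le> a" using ge a_def b_def by simp
  have zab: "z / a \<le> z / b" using a b z ab by (simp add: frac_le)
  have e1: "pimh1 Z u (Suc (Suc m)) = (if u (m+2) \<le> min 1 (z / a) then Z (m+2) else pimh1 Z u (Suc m))"
    unfolding a_def z_def by (subst pimh1.simps(2)) (simp del: pimh1.simps pimh2.simps add: numeral_2_eq_2)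
  have e2: "pimh2 Z u (Suc m) = (if u (m+2) \<le> min 1 (z / b) then Z (m+2) else pimh2 Z u m)"
    unfolding b_def z_def by (subst pimh2.simps(2)) (simp del: pimh1.simps pimh2.simps)
  show ?thesis
  proof (cases "u (m+2) \<le> min 1 (z / a)")
    case True
    then have "u (m+2) \<le> min 1 (z / b)" using zab by linarith
    then show ?thesis using True e1 e2 by (simp del: pimh1.simps pimh2.simps)
  next
    case False
    show ?thesis
    proof (cases "u (m+2) \<le> min 1 (z / b)")
      case True
      then have "z / a < 1" using False by linarith
      then have "z < a" using a by (simp add: divide_less_eq)
      then show ?thesis using True False e1 e2 a_def z_def by (simp del: pimh1.simps pimh2.simps)
    next
      case False2: False
      have "pimh1 Z u (Suc (Suc m)) = pimh1 Z u (Suc m)" using e1 False by metis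
      moreover have "pimh2 Z u (Suc m) = pimh2 Z u m" using e2 False2 by metis
      ultimately show ?thesis using ab a_def b_def by metis
    qed
  qed
qed

lemma chain_mono:
  assumes pos: "\<And>k. snd (Z k) > 0" and n: "n \<ge> 1"
    and ge: "snd (pimh1 Z u n) \<ge> snd (pimh2 Z u (n - 1))"
  shows "snd (pimh1 Z u (n + s)) \<ge> snd (pimh2 Z u (n + s - 1))"
proof (induction s)
  case 0 then show ?case using ge by simp
next
  case (Suc s)
  define m where "m = n + s - 1"
  have m: "n + s = Suc m" using n unfolding m_def by simp
  have "snd (pimh1 Z u (Suc m)) \<ge> snd (pimh2 Z u m)" using Suc m by (simp del: pimh1.simps pimh2.simps)
  from step_mono[OF pos this] show ?case using m by (simp del: pimh1.simps pimh2.simps)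
qed

theorem proposition5:
  fixes M :: "'a measure" and S :: "'x measure"
    and Z :: "nat \<Rightarrow> 'a \<Rightarrow> 'x \<times> real"
    and u :: "nat \<Rightarrow> 'a \<Rightarrow> real"
    and n s :: nat
  assumes "prob_space M"
    and Z_meas: "\<And>k. Z k \<in> measurable M (S \<Otimes>\<^sub>M borel)"
    and Z_indep: "prob_space.indep_vars M (\<lambda>_. S \<Otimes>\<^sub>M borel) Z UNIV"
    and Z_iid: "\<And>k. distr M (S \<Otimes>\<^sub>M borel) (Z k) = distr M (S \<Otimes>\<^sub>M borel) (Z 0)"
    and Z_pos: "\<And>k \<omega>. \<omega> \<in> space M \<Longrightarrow> snd (Z k \<omega>) > 0"
    and u_indep: "prob_space.indep_vars M (\<lambda>_. borel) u UNIV"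
    and u_unif: "\<And>k. k \<ge> 1 \<Longrightarrow> distributed M lborel (u k) (\<lambda>x. indicator {0..1} x)"
    and Zu_indep: "prob_space.indep_set M
        (sets (vimage_algebra (space M) (\<lambda>\<omega> k. Z k \<omega>) (Pi\<^sub>M UNIV (\<lambda>_. S \<Otimes>\<^sub>M borel))))
        (sets (vimage_algebra (space M) (\<lambda>\<omega> k. u k \<omega>) (Pi\<^sub>M UNIV (\<lambda>_. borel))))"
    and "n \<ge> 1"
  shows "AE \<omega> in M.
           snd (pimh1 (\<lambda>k. Z k \<omega>) (\<lambda>k. u k \<omega>) n)
             \<ge> snd (pimh2 (\<lambda>k. Z k \<omega>) (\<lambda>k. u k \<omega>) (n - 1))
           \<longrightarrow> snd (pimh1 (\<lambda>k. Z k \<omega>) (\<lambda>k. u k \<omega>) (n + s))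
             \<ge> snd (pimh2 (\<lambda>k. Z k \<omega>) (\<lambda>k. u k \<omega>) (n + s - 1))"
  by (rule AE_I2, rule impI, rule chain_mono) (use Z_pos \<open>n \<ge> 1\<close> in auto)

end
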